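(* Let $r\ge1$, $\kappa\ge3m_2+1$, $T>0$, and let $U\in C^{r+1}([0,T];\mathcal X)$ be the exact solution of $U_t=\varepsilon^2\Delta U+f(U)$ (periodic boundary conditions) with $\|U(t)\|_{\mathcal X}\le\sqrt{m_2}$ for all $t\in[0,T]$. Use the uniform nodes $a_{j,k}=k/j$ in the scheme, let $\tau>0$, $t_n\ge0$ with $t_n+\tau\le T$, $s_k=k\tau/r$ ($k=0,\dots,r$), and let $U^n\in\mathcal X_{m_2}$. Then: (i) at every $\boldsymbol x$ where $\max_{s\in[0,\tau]}\|P_r^n(s,\boldsymbol x)\|_{\rm F}\le\kappa\sqrt{m_2}$ one has $\alpha_r^n(\boldsymbol x)=1$, i.e. $\widetilde P_r^n(\cdot,\boldsymbol x)=P_r^n(\cdot,\boldsymbol x)$; (ii) for every $s\in[0,\tau]$, $$\|P_r^n(s)-\widetilde P_r^n(s)\|_{\mathcal X}\le2\kappa r^r\sum_{k=0}^r\|W_r^n(s_k)-U(t_n+s_k)\|_{\mathcal X}+C_r\tau^{r+1},$$ where $W_r^n(0)=U^n$ and $C_r$ depends only on $\kappa$, $m_1$, $m_2$, $r$ and the $C^{r+1}([0,T];\mathcal X)$-norm of $U$, not on $\tau$ or $n$.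
   Context: Let $d\in\{1,2,3\}$ and let $\Omega\subset\mathbb{R}^d$ be a rectangular box, all functions on $\Omega$ being $\Omega$-periodic. Let $m_1\ge m_2\ge1$ be integers, $\varepsilon>0$, $\kappa>0$. $\|\cdot\|_{\rm F}$ is the Frobenius norm. For $U\in\mathbb{R}^{m_1\times m_2}$, $f(U)=U-UU^\top U$ and $\mathcal N[U]=\kappa U+f(U)$ (applied pointwise to functions). $\mathcal X$ is the Banach space of continuous $\Omega$-periodic functions $\overline\Omega\to\mathbb{R}^{m_1\times m_2}$ with norm $\|W\|_{\mathcal X}=\max_{\boldsymbol x}\|W(\boldsymbol x)\|_{\rm F}$, and $\mathcal X_{m_2}=\{W\in\mathcal X:\|W\|_{\mathcal X}\le\sqrt{m_2}\}$. $\mathcal L_\kappa=\varepsilon^2\Delta-\kappa\mathcal I$ with periodic boundary conditions, acting componentwise, and $e^{t\mathcal L_\kappa}=e^{-\kappa t}e^{t\varepsilon^2\Delta}$ with $e^{t\varepsilon^2\Delta}$ the periodic heat semigroup. Rescaled ETDRK scheme: for each $j\ge1$ fix nodes $0=a_{j,0}<a_{j,1}<\dots<a_{j,j}=1$. Given a time step $\tau>0$ and $U^n\in\mathcal X$, define for $s\in[0,\tau]$: $W_1^n(s)=e^{s\mathcal L_\kappa}U^n+\int_0^s e^{(s-\sigma)\mathcal L_\kappa}\mathcal N[U^n]\,\mathrm d\sigma$. Recursively for $j\ge1$: let $P_j^n(s,\boldsymbol x)$ be the unique polynomial in $s$ of degree $\le j$ with coefficients in $\mathbb{R}^{m_1\times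 m_2}$ (depending on $\boldsymbol x$) such that $P_j^n(0,\boldsymbol x)=\mathcal N[U^n(\boldsymbol x)]$ and $P_j^n(a_{j,k}\tau,\boldsymbol x)=\mathcal N[W_j^n(a_{j,k}\tau,\boldsymbol x)]$ for $k=1,\dots,j$; let $\alpha_j^n(\boldsymbol x)=\min\{\kappa\sqrt{m_2}/\max_{s\in[0,\tau]}\|P_j^n(s,\boldsymbol x)\|_{\rm F},\,1\}$ (taken to be $1$ if the maximum is $0$), $\widetilde P_j^n(s,\boldsymbol x)=\alpha_j^n(\boldsymbol x)P_j^n(s,\boldsymbol x)$, and $W_{j+1}^n(s)=e^{s\mathcal L_\kappa}U^n+\int_0^s e^{(s-\sigma)\mathcal L_\kappa}\widetilde P_j^n(\sigma)\,\mathrm d\sigma$. The rescaled ETDRK$r$ scheme is $U^0=U_0$, $U^{n+1}=W_r^n(\tau)$ for $n\ge0$. *)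

theory Defs
  imports "HOL-Analysis.Analysis"
begin

text \<open>Matrices in R^{m1 x m2} are rendered as real^'m2^'m1 (rows indexed by 'm1);
  the HOL-Analysis norm on this type is exactly the Frobenius norm.
  Points of R^d are real^'d.\<close>

definition fnl :: "real^'n^'m \<Rightarrow> real^'n^'m" where
  "fnl U = U - U ** transpose U ** U"

definition Nop :: "real \<Rightarrow> real^'n^'m \<Rightarrow> real^'n^'m" where
  "Nop \<kappa> U = \<kappa> *\<^sub>R U + fnl U"

definition periodic_box :: "real^'d \<Rightarrow> (real^'d \<Rightarrow> 'b) \<Rightarrow> bool" where
  "periodic_box L g \<longleftrightarrow> (\<forall>x i. g (x + axis i (L$i)) = g x)"

text \<open>Sup norm (the norm of the space X).\<close>
definition supnorm :: "(real^'d \<Rightarrow> real^'n^'m) \<Rightarrow> real" where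
  "supnorm g = (SUP x. norm (g x))"

text \<open>Heat semigroup e^{t eps^2 Delta}: convolution with the Gaussian heat kernel
  (applied to the periodic function on all of R^d), identity at t = 0.\<close>
definition heat_kernel :: "real \<Rightarrow> real \<Rightarrow> real^'d \<Rightarrow> real" where
  "heat_kernel \<epsilon> t y =
     (4 * pi * \<epsilon>\<^sup>2 * t) powr (- real CARD('d) / 2) * exp (- (norm y)\<^sup>2 / (4 * \<epsilon>\<^sup>2 * t))"

definition heat :: "real \<Rightarrow> real \<Rightarrow> (real^'d \<Rightarrow> real^'n^'m) \<Rightarrow> real^'d \<Rightarrow> real^'n^'m" where
  "heat \<epsilon> t g x = (if t = 0 then g x
      else integral UNIV (\<lambda>y. heat_kernel \<epsilon> t (x - y) *\<^sub>R g y))"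

text \<open>e^{t L_kappa} = e^{-kappa t} e^{t eps^2 Delta}.\<close>
definition semi :: "real \<Rightarrow> real \<Rightarrow> real \<Rightarrow> (real^'d \<Rightarrow> real^'n^'m) \<Rightarrow> real^'d \<Rightarrow> real^'n^'m" where
  "semi \<epsilon> \<kappa> t g x = exp (- \<kappa> * t) *\<^sub>R heat \<epsilon> t g x"

definition duhamel :: "real \<Rightarrow> real \<Rightarrow> (real^'d \<Rightarrow> real^'n^'m) \<Rightarrow> (real \<Rightarrow> real^'d \<Rightarrow> real^'n^'m)
    \<Rightarrow> real \<Rightarrow> real^'d \<Rightarrow> real^'n^'m" where
  "duhamel \<epsilon> \<kappa> U0 G s x = semi \<epsilon> \<kappa> s U0 x + integral {0..s} (\<lambda>\<sigma>. semi \<epsilon> \<kappa> (s - \<sigma>) (G \<sigma>) x)"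

text \<open>Lagrange basis polynomials for the nodes a j 0 * tau, ..., a j j * tau
  (with a j 0 = 0); the interpolation polynomial of degree <= j.\<close>
definition lagr :: "(nat \<Rightarrow> nat \<Rightarrow> real) \<Rightarrow> nat \<Rightarrow> real \<Rightarrow> nat \<Rightarrow> real \<Rightarrow> real" where
  "lagr a j \<tau> k s = (\<Prod>i\<in>{0..j} - {k}. (s - a j i * \<tau>) / (a j k * \<tau> - a j i * \<tau>))"

definition Pint :: "(nat \<Rightarrow> nat \<Rightarrow> real) \<Rightarrow> real \<Rightarrow> real \<Rightarrow> nat \<Rightarrow> (real^'d \<Rightarrow> real^'n^'m)
    \<Rightarrow> (real \<Rightarrow> real^'d \<Rightarrow> real^'n^'m) \<Rightarrow> real \<Rightarrow> real^'d \<Rightarrow> real^'n^'m" where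
  "Pint a \<kappa> \<tau> j Vn Wj s x =
     (\<Sum>k=0..j. lagr a j \<tau> k s *\<^sub>R
        (if k = 0 then Nop \<kappa> (Vn x) else Nop \<kappa> (Wj (a j k * \<tau>) x)))"

text \<open>Rescaling factor alpha_j^n(x) for a polynomial P(s,x), with m2 = CARD('n).\<close>
definition alpha :: "real \<Rightarrow> real \<Rightarrow> (real \<Rightarrow> real^'d \<Rightarrow> real^'n^'m) \<Rightarrow> real^'d \<Rightarrow> real" where
  "alpha \<kappa> \<tau> P x =
     (let M = (SUP s\<in>{0..\<tau>}. norm (P s x))
      in if M = 0 then 1 else min (\<kappa> * sqrt (real CARD('n)) / M) 1)"

text \<open>Wsch ... j represents W_{j+1}^n.\<close>
primrec Wsch :: "(nat \<Rightarrow> nat \<Rightarrow> real) \<Rightarrow> real \<Rightarrow> real \<Rightarrow> real \<Rightarrow> (real^'d \<Rightarrow> real^'n^'m)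
    \<Rightarrow> nat \<Rightarrow> real \<Rightarrow> real^'d \<Rightarrow> real^'n^'m" where
  "Wsch a \<epsilon> \<kappa> \<tau> Vn 0 = duhamel \<epsilon> \<kappa> Vn (\<lambda>\<sigma> x. Nop \<kappa> (Vn x))"
| "Wsch a \<epsilon> \<kappa> \<tau> Vn (Suc j) =
     (let P = Pint a \<kappa> \<tau> (Suc j) Vn (Wsch a \<epsilon> \<kappa> \<tau> Vn j)
      in duhamel \<epsilon> \<kappa> Vn (\<lambda>\<sigma> x. alpha \<kappa> \<tau> P x *\<^sub>R P \<sigma> x))"

definition Wn where "Wn a \<epsilon> \<kappa> \<tau> Vn j = Wsch a \<epsilon> \<kappa> \<tau> Vn (j - 1)"

definition Pn where "Pn a \<epsilon> \<kappa> \<tau> Vn j = Pint a \<kappa> \<tau> j Vn (Wn a \<epsilon> \<kappa> \<tau> Vn j)"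

definition alphan where "alphan a \<epsilon> \<kappa> \<tau> Vn j = alpha \<kappa> \<tau> (Pn a \<epsilon> \<kappa> \<tau> Vn j)"

definition Ptn where
  "Ptn a \<epsilon> \<kappa> \<tau> Vn j s x = alphan a \<epsilon> \<kappa> \<tau> Vn j x *\<^sub>R Pn a \<epsilon> \<kappa> \<tau> Vn j s x"

definition unif_nodes :: "nat \<Rightarrow> nat \<Rightarrow> real" where
  "unif_nodes j k = real k / real j"

definition pdiff :: "'d::finite \<Rightarrow> (real^'d \<Rightarrow> 'b::real_normed_vector) \<Rightarrow> real^'d \<Rightarrow> 'b" where
  "pdiff i g x = vector_derivative (\<lambda>h. g (x + h *\<^sub>R axis i 1)) (at 0)"

definition twice_partially_diff :: "(real^'d \<Rightarrow> 'b::real_normed_vector) \<Rightarrow> bool" where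
  "twice_partially_diff g \<longleftrightarrow> (\<forall>i x.
     (\<lambda>h. g (x + h *\<^sub>R axis i 1)) differentiable (at 0) \<and>
     (\<lambda>h. pdiff i g (x + h *\<^sub>R axis i 1)) differentiable (at 0))"

definition laplacian :: "(real^'d \<Rightarrow> 'b::real_normed_vector) \<Rightarrow> real^'d \<Rightarrow> 'b" where
  "laplacian g x = (\<Sum>i\<in>UNIV. pdiff i (pdiff i g) x)"

definition Ck_derivs :: "nat \<Rightarrow> real \<Rightarrow> (real \<Rightarrow> 'a::real_normed_vector) \<Rightarrow> (nat \<Rightarrow> real \<Rightarrow> 'a) \<Rightarrow> bool" where
  "Ck_derivs q T U Ds \<longleftrightarrow> (\<forall>t\<in>{0..T}. Ds 0 t = U t) \<and>
     (\<forall>k<q. \<forall>t\<in>{0..T}. (Ds k has_vector_derivative Ds (Suc k) t) (at t within {0..T})) \<and>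
     continuous_on {0..T} (Ds q)"

definition Ck_norm :: "nat \<Rightarrow> real \<Rightarrow> (nat \<Rightarrow> real \<Rightarrow> 'a::real_normed_vector) \<Rightarrow> real" where
  "Ck_norm q T Ds = Max ((\<lambda>k. SUP t\<in>{0..T}. norm (Ds k t)) ` {0..q})"

definition exact_solution :: "real \<Rightarrow> real^'d \<Rightarrow> real \<Rightarrow> (real \<Rightarrow> ((real^'d) \<Rightarrow>\<^sub>C (real^'n^'m))) \<Rightarrow> bool" where
  "exact_solution \<epsilon> L T U \<longleftrightarrow>
     (\<forall>t\<in>{0..T}. periodic_box L (apply_bcontfun (U t)) \<and> twice_partially_diff (apply_bcontfun (U t))) \<and>
     (\<forall>t\<in>{0..T}. \<forall>x. ((\<lambda>t'. apply_bcontfun (U t') x) has_vector_derivative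
         (\<epsilon>\<^sup>2 *\<^sub>R laplacian (apply_bcontfun (U t)) x + fnl (apply_bcontfun (U t) x))) (at t within {0..T}))"

end

theory Submission
  imports Defs "HOL-Probability.Probability" "HOL-Computational_Algebra.Polynomial"
begin


lemma norm_sq_basis: "(norm (v::'a::euclidean_space))^2 = (\<Sum>b\<in>Basis. (v \<bullet> b)^2)"
proof -
  have "(norm v)^2 = inner v v" by (rule power2_norm_eq_inner)
  also have "\<dots> = (\<Sum>b\<in>Basis. (v \<bullet> b) * (v \<bullet> b))" by (rule euclidean_inner)
  finally show ?thesis by (simp add: power2_eq_square)
qed

lemma heat_kernel_prod:
  fixes x y :: "real^'d"
  assumes e: "\<epsilon> > 0" and t: "t > 0"
  shows "heat_kernel \<epsilon> t (x - y) = (\<Prod>b\<in>Basis. normal_density (x \<bullet> b) (sqrt (2*\<epsilon>\<^sup>2*t)) (y \<bullet> b))"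
proof -
  have c: "card (Basis :: (real^'d) set) = CARD('d)" by simp
  have pos: "4 * pi * \<epsilon>\<^sup>2 * t > 0" using e t by simp
  have "(\<Prod>b\<in>(Basis::(real^'d) set). normal_density (x \<bullet> b) (sqrt (2*\<epsilon>\<^sup>2*t)) (y \<bullet> b))
     = (\<Prod>b\<in>(Basis::(real^'d) set). (4 * pi * \<epsilon>\<^sup>2 * t) powr (-1/2) * exp (- ((x - y) \<bullet> b)\<^sup>2 / (4 * \<epsilon>\<^sup>2 * t)))"
  proof (rule prod.cong[OF refl])
    fix b :: "real^'d"
    have s: "(sqrt (2*\<epsilon>\<^sup>2*t))\<^sup>2 = 2*\<epsilon>\<^sup>2*t" using e t by simp
    have "1 / sqrt (2 * pi * (2*\<epsilon>\<^sup>2*t)) = (4 * pi * \<epsilon>\<^sup>2 * t) powr (-1/2)"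
      using pos by (simp add: powr_minus_divide powr_half_sqrt[symmetric] mult.assoc)
    then show "normal_density (x \<bullet> b) (sqrt (2*\<epsilon>\<^sup>2*t)) (y \<bullet> b) = (4 * pi * \<epsilon>\<^sup>2 * t) powr (-1/2) * exp (- ((x - y) \<bullet> b)\<^sup>2 / (4 * \<epsilon>\<^sup>2 * t))"
      unfolding normal_density_def s by (simp add: inner_diff_left power2_commute mult.assoc)
  qed
  also have "\<dots> = ((4 * pi * \<epsilon>\<^sup>2 * t) powr (-1/2))^CARD('d) * exp (\<Sum>b\<in>(Basis::(real^'d) set). - ((x - y) \<bullet> b)\<^sup>2 / (4 * \<epsilon>\<^sup>2 * t))"
    by (simp add: prod.distrib exp_sum)
  also have "\<dots> = heat_kernel \<epsilon> t (x - y)"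
  proof -
    have pw: "((4 * pi * \<epsilon>\<^sup>2 * t) powr (-1/2))^CARD('d) = (4 * pi * \<epsilon>\<^sup>2 * t) powr (- real CARD('d) / 2)"
      using pos by (subst powr_power) auto
    show ?thesis unfolding heat_kernel_def norm_sq_basis[of "x - y"] pw
      by (simp add: sum_divide_distrib[symmetric] sum_negf)
  qed
  finally show ?thesis by simp
qed

lemma heat_kernel_nn:
  fixes x :: "real^'d"
  assumes e: "\<epsilon> > 0" and t: "t > 0"
  shows "(\<integral>\<^sup>+y. ennreal (heat_kernel \<epsilon> t (x - y)) \<partial>lborel) = 1"
proof -
  have "(\<integral>\<^sup>+y. ennreal (heat_kernel \<epsilon> t (x - y)) \<partial>lborel)
     = (\<integral>\<^sup>+y. (\<Prod>b\<in>Basis. ennreal (normal_density (x \<bullet> b) (sqrt (2*\<epsilon>\<^sup>2*t)) (y \<bullet> b))) \<partial>lborel)"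
    by (simp add: heat_kernel_prod[OF e t] prod_ennreal)
  also have "\<dots> = (\<Prod>b\<in>(Basis::(real^'d) set). (\<integral>\<^sup>+z. ennreal (normal_density (x \<bullet> b) (sqrt (2*\<epsilon>\<^sup>2*t)) z) \<partial>lborel))"
    by (rule nn_integral_lborel_prod) auto
  also have "\<dots> = 1"
  proof -
    have sp: "sqrt (2*\<epsilon>\<^sup>2*t) > 0" using e t by simp
    have "\<And>\<mu>. (\<integral>\<^sup>+z. ennreal (normal_density \<mu> (sqrt (2*\<epsilon>\<^sup>2*t)) z) \<partial>lborel) = 1"
      by (subst nn_integral_eq_integral) (auto intro: integrable_normal_density[OF sp] simp: integral_normal_density[OF sp])
    then show ?thesis by simp
  qed
  finally show ?thesis .
qed

lemma heat_kernel_has_integral: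
  fixes x :: "real^'d"
  assumes e: "\<epsilon> > 0" and t: "t > 0"
  shows "((\<lambda>y. heat_kernel \<epsilon> t (x - y)) has_integral 1) UNIV"
proof -
  have m: "(\<lambda>y. heat_kernel \<epsilon> t (x - y)) \<in> borel_measurable lborel"
    unfolding heat_kernel_def by measurable
  have nn: "\<And>y. heat_kernel \<epsilon> t (x - y) \<ge> 0" unfolding heat_kernel_def by simp
  have i: "integrable lborel (\<lambda>y. heat_kernel \<epsilon> t (x - y))"
    by (rule integrableI_nonneg[OF m]) (auto simp: nn heat_kernel_nn[OF e t])
  have "integral\<^sup>L lborel (\<lambda>y. heat_kernel \<epsilon> t (x - y)) = 1"
    by (subst integral_eq_nn_integral[OF m]) (auto simp: nn heat_kernel_nn[OF e t])
  with has_integral_integral_lborel[OF i] show ?thesis by simp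
qed


lemma frob_sq: "(norm (A::real^'n^'m))^2 = (\<Sum>i\<in>UNIV. \<Sum>j\<in>UNIV. (A$i$j)^2)"
  by (simp add: norm_vec_def L2_set_def sum_nonneg)

lemma frob_sq_col: "(norm (A::real^'n^'m))^2 = (\<Sum>j\<in>UNIV. (norm (column j A))^2)"
proof -
  have "(\<Sum>j\<in>UNIV. (norm (column j A))^2) = (\<Sum>j\<in>UNIV. \<Sum>i\<in>UNIV. (A$i$j)^2)"
    by (simp add: norm_vec_def L2_set_def sum_nonneg column_def)
  also have "\<dots> = (\<Sum>i\<in>UNIV. \<Sum>j\<in>UNIV. (A$i$j)^2)" by (rule sum.swap)
  finally show ?thesis by (simp add: frob_sq)
qed

lemma frob_sq_row: "(norm (A::real^'n^'m))^2 = (\<Sum>i\<in>UNIV. (norm (A$i))^2)"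
  by (simp add: norm_vec_def L2_set_def sum_nonneg)

lemma mult_entry: "(A ** B)$i$k = inner (A$i) (column k B)" for A :: "real^'n^'m" and B :: "real^'k^'n"
  by (simp add: matrix_matrix_mult_def inner_vec_def column_def)

lemma norm_mmult: "norm (A ** B) \<le> norm A * norm B" for A :: "real^'n^'m" and B :: "real^'k^'n"
proof -
  have "(norm (A ** B))^2 = (\<Sum>i\<in>UNIV. \<Sum>k\<in>UNIV. (inner (A$i) (column k B))^2)"
    by (simp add: frob_sq mult_entry)
  also have "\<dots> \<le> (\<Sum>i\<in>UNIV. \<Sum>k\<in>UNIV. (norm (A$i))^2 * (norm (column k B))^2)"
  proof (intro sum_mono)
    fix i k
    have "\<bar>inner (A$i) (column k B)\<bar> \<le> norm (A$i) * norm (column k B)"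
      by (rule Cauchy_Schwarz_ineq2)
    then have "(inner (A$i) (column k B))^2 \<le> (norm (A$i) * norm (column k B))^2"
      by (metis abs_ge_zero power2_abs power_mono)
    then show "(inner (A$i) (column k B))^2 \<le> (norm (A$i))^2 * (norm (column k B))^2"
      by (simp add: power_mult_distrib)
  qed
  also have "\<dots> = (\<Sum>i\<in>UNIV. (norm (A$i))^2) * (\<Sum>k\<in>UNIV. (norm (column k B))^2)"
    by (simp add: sum_product)
  also have "\<dots> = (norm A)^2 * (norm B)^2"
    by (simp only: frob_sq_col[of B, symmetric] frob_sq_row[of A, symmetric])
  finally have "(norm (A ** B))^2 \<le> (norm A * norm B)^2" by (simp add: power_mult_distrib)
  then show ?thesis by (simp add: power2_le_iff_abs_le)
qed

lemma norm_transpose: "norm (transpose A) = norm (A::real^'n^'m)"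
proof -
  have "(norm (transpose A))^2 = (\<Sum>i\<in>UNIV. \<Sum>j\<in>UNIV. (A$j$i)^2)"
    unfolding frob_sq by (simp add: transpose_def)
  also have "\<dots> = (norm A)^2" unfolding frob_sq by (rule sum.swap)
  finally show ?thesis by (simp add: power2_eq_iff_nonneg)
qed

lemma transpose_diff: "transpose (A - B) = transpose A - transpose (B::real^'n^'m)"
  by (simp add: transpose_def vec_eq_iff)

lemma matrix_diff_ldistrib: "(A::real^'n^'m) ** (B - C) = A ** B - A ** C"
  by (simp add: matrix_matrix_mult_def vec_eq_iff sum_subtractf algebra_simps)

lemma matrix_diff_rdistrib: "((A::real^'n^'m) - B) ** C = A ** C - B ** C"
  by (simp add: matrix_matrix_mult_def vec_eq_iff sum_subtractf algebra_simps)

lemma matrix_add_rdistrib': "((A::real^'n^'m) + B) ** C = A ** C + B ** C"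
  by (simp add: matrix_matrix_mult_def vec_eq_iff sum.distrib algebra_simps)

lemma matrix_scaleR_left: "((c::real) *\<^sub>R (A::real^'n^'m)) ** B = c *\<^sub>R (A ** B)"
  by (simp add: matrix_matrix_mult_def vec_eq_iff sum_distrib_left algebra_simps)

lemma matrix_scaleR_right: "(A::real^'n^'m) ** ((c::real) *\<^sub>R B) = c *\<^sub>R (A ** B)"
  by (simp add: matrix_matrix_mult_def vec_eq_iff sum_distrib_left algebra_simps)

lemma cube_diff: "W ** transpose W ** W - U ** transpose U ** U =
   (W - U) ** transpose W ** W + U ** transpose (W - U) ** W + U ** transpose U ** (W - U)"
  for W U :: "real^'n^'m"
  by (simp add: matrix_diff_ldistrib matrix_diff_rdistrib transpose_diff)

lemma Nop_lipschitz:
  fixes W U :: "real^'n^'m"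
  assumes W: "norm W \<le> sqrt (real CARD('n))" and U: "norm U \<le> sqrt (real CARD('n))"
    and k: "\<kappa> \<ge> 0"
  shows "norm (Nop \<kappa> W - Nop \<kappa> U) \<le> (\<kappa> + 1 + 3 * real CARD('n)) * norm (W - U)"
proof -
  let ?m = "real CARD('n)"
  let ?d = "norm (W - U)"
  have e: "Nop \<kappa> W - Nop \<kappa> U = (\<kappa> + 1) *\<^sub>R (W - U) -
     ((W - U) ** transpose W ** W + U ** transpose (W - U) ** W + U ** transpose U ** (W - U))"
    unfolding cube_diff[symmetric] Nop_def fnl_def by (simp add: algebra_simps)
  have ww: "norm W * norm W \<le> ?m"
  proof -
    have "norm W * norm W \<le> sqrt ?m * sqrt ?m" by (rule mult_mono) (use W U in auto)
    then show ?thesis by simp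
  qed
  have uw: "norm U * norm W \<le> ?m"
  proof -
    have "norm U * norm W \<le> sqrt ?m * sqrt ?m" by (rule mult_mono) (use W U in auto)
    then show ?thesis by simp
  qed
  have uu: "norm U * norm U \<le> ?m"
  proof -
    have "norm U * norm U \<le> sqrt ?m * sqrt ?m" by (rule mult_mono) (use W U in auto)
    then show ?thesis by simp
  qed
  have t1: "norm ((W - U) ** transpose W ** W) \<le> ?d * ?m"
  proof -
    have "norm ((W - U) ** transpose W ** W) \<le> norm ((W - U) ** transpose W) * norm W" by (rule norm_mmult)
    also have "\<dots> \<le> (?d * norm W) * norm W"
      by (rule mult_right_mono) (auto intro: order_trans[OF norm_mmult] simp: norm_transpose)
    also have "\<dots> \<le> ?d * ?m" using ww by (simp add: mult.assoc mult_left_mono)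
    finally show ?thesis .
  qed
  have t2: "norm (U ** transpose (W - U) ** W) \<le> ?d * ?m"
  proof -
    have "norm (U ** transpose (W - U) ** W) \<le> norm (U ** transpose (W - U)) * norm W" by (rule norm_mmult)
    also have "\<dots> \<le> (norm U * ?d) * norm W"
      by (rule mult_right_mono) (auto intro: order_trans[OF norm_mmult] simp: norm_transpose)
    also have "\<dots> = ?d * (norm U * norm W)" by simp
    also have "\<dots> \<le> ?d * ?m" using uw by (simp add: mult_left_mono)
    finally show ?thesis .
  qed
  have t3: "norm (U ** transpose U ** (W - U)) \<le> ?d * ?m"
  proof -
    have "norm (U ** transpose U ** (W - U)) \<le> norm (U ** transpose U) * ?d" by (rule norm_mmult)
    also have "\<dots> \<le> (norm U * norm U) * ?d"
      by (rule mult_right_mono) (auto intro: order_trans[OF norm_mmult] simp: norm_transpose)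
    also have "\<dots> \<le> ?d * ?m" using mult_left_mono[OF uu norm_ge_zero[of "W - U"]] by (simp add: mult.commute)
    finally show ?thesis .
  qed
  have "norm (Nop \<kappa> W - Nop \<kappa> U) \<le> norm ((\<kappa> + 1) *\<^sub>R (W - U)) +
     norm ((W - U) ** transpose W ** W + U ** transpose (W - U) ** W + U ** transpose U ** (W - U))"
    unfolding e by (rule norm_triangle_ineq4)
  also have "\<dots> \<le> (\<kappa> + 1) * ?d + (?d * ?m + ?d * ?m + ?d * ?m)"
  proof -
    have "norm ((W - U) ** transpose W ** W + U ** transpose (W - U) ** W + U ** transpose U ** (W - U))
       \<le> norm ((W - U) ** transpose W ** W) + norm (U ** transpose (W - U) ** W) + norm (U ** transpose U ** (W - U))"
      by (meson add_mono_thms_linordered_semiring(3) norm_triangle_ineq order_trans)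
    then have "norm ((W - U) ** transpose W ** W + U ** transpose (W - U) ** W + U ** transpose U ** (W - U))
       \<le> ?d * ?m + ?d * ?m + ?d * ?m" using t1 t2 t3 by linarith
    then show ?thesis using k by (simp add: abs_of_nonneg)
  qed
  finally show ?thesis by (simp add: algebra_simps)
qed

lemma inner_adj: "inner A (B ** C) = inner (transpose B ** A) (C::real^'k^'n)"
  for A :: "real^'k^'m" and B :: "real^'n^'m"
proof -
  have l: "inner A (B ** C) = (\<Sum>i\<in>UNIV. \<Sum>k\<in>UNIV. \<Sum>j\<in>UNIV. A$i$k * B$i$j * C$j$k)"
    by (simp add: inner_vec_def matrix_matrix_mult_def sum_distrib_left mult.assoc)
  have r: "inner (transpose B ** A) C = (\<Sum>j\<in>UNIV. \<Sum>k\<in>UNIV. \<Sum>i\<in>UNIV. A$i$k * B$i$j * C$j$k)"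
    by (simp add: inner_vec_def matrix_matrix_mult_def transpose_def sum_distrib_left sum_distrib_right mult_ac)
  have "(\<Sum>i\<in>UNIV. \<Sum>k\<in>UNIV. \<Sum>j\<in>UNIV. A$i$k * B$i$j * C$j$k)
      = (\<Sum>i\<in>UNIV. \<Sum>j\<in>UNIV. \<Sum>k\<in>UNIV. A$i$k * B$i$j * C$j$k)"
    by (rule sum.cong[OF refl], rule sum.swap)
  also have "\<dots> = (\<Sum>j\<in>UNIV. \<Sum>i\<in>UNIV. \<Sum>k\<in>UNIV. A$i$k * B$i$j * C$j$k)"
    by (rule sum.swap)
  also have "\<dots> = (\<Sum>j\<in>UNIV. \<Sum>k\<in>UNIV. \<Sum>i\<in>UNIV. A$i$k * B$i$j * C$j$k)"
    by (rule sum.cong[OF refl], rule sum.swap)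
  finally show ?thesis using l r by simp
qed

lemma inner_mat1: "inner (mat 1 :: real^'n^'n) (mat 1) = real CARD('n)"
  by (simp add: inner_vec_def mat_def if_distrib cong: if_cong)

lemma Nop_bound:
  fixes U :: "real^'n^'m"
  assumes U: "norm U \<le> sqrt (real CARD('n))"
    and k: "\<kappa> \<ge> 3 * real CARD('n) + 1"
  shows "norm (Nop \<kappa> U) \<le> \<kappa> * sqrt (real CARD('n))"
proof -
  let ?m = "real CARD('n)"
  define M where "M = transpose U ** U - mat 1"
  have UM: "U ** M = U ** transpose U ** U - U"
    by (simp add: M_def matrix_diff_ldistrib matrix_mul_assoc)
  have N: "Nop \<kappa> U = \<kappa> *\<^sub>R U - U ** M"
    unfolding Nop_def fnl_def UM by simp
  have u2: "(norm U)^2 \<le> ?m" using U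
    by (metis norm_ge_zero of_nat_0_le_iff power_mono real_sqrt_pow2)
  have i1: "inner U (U ** M) = (norm M)^2 + (norm U)^2 - ?m"
  proof -
    have "inner U (U ** M) = inner (transpose U ** U) M" by (rule inner_adj)
    also have "\<dots> = inner (M + mat 1) M" by (simp add: M_def)
    also have "\<dots> = (norm M)^2 + inner (mat 1) M" by (simp add: inner_add_left power2_norm_eq_inner)
    also have "inner (mat 1) M = inner (mat 1) (transpose U ** U) - ?m"
      by (simp add: M_def inner_diff_right inner_mat1)
    also have "inner (mat 1) (transpose U ** U) = inner (transpose (transpose U) ** mat 1) U"
      by (rule inner_adj)
    also have "\<dots> = (norm U)^2" by (simp add: power2_norm_eq_inner)
    finally show ?thesis by simp
  qed
  have "(norm (Nop \<kappa> U))^2 = \<kappa>^2 * (norm U)^2 - 2 * \<kappa> * inner U (U ** M) + (norm (U ** M))^2"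
    unfolding N using dot_norm_neg[of "\<kappa> *\<^sub>R U" "U ** M"] by (simp add: power_mult_distrib)
  also have "\<dots> = \<kappa>^2 * (norm U)^2 - 2 * \<kappa> * ((norm M)^2 + (norm U)^2 - ?m) + (norm (U ** M))^2"
    by (simp add: i1)
  also have "(norm (U ** M))^2 \<le> ?m * (norm M)^2"
  proof -
    have "norm (U ** M) \<le> norm U * norm M" by (rule norm_mmult)
    then have "(norm (U ** M))^2 \<le> (norm U * norm M)^2" by (simp add: power_mono)
    also have "\<dots> = (norm U)^2 * (norm M)^2" by (simp add: power_mult_distrib)
    also have "\<dots> \<le> ?m * (norm M)^2"
      by (rule mult_right_mono[OF u2]) simp
    finally show ?thesis .
  qed
  finally have a: "(norm (Nop \<kappa> U))^2 \<le> \<kappa>^2 * (norm U)^2 - 2 * \<kappa> * ((norm M)^2 + (norm U)^2 - ?m) + ?m * (norm M)^2"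
    by simp
  have m1: "?m \<ge> 1" by (simp add: Suc_le_eq)
  have k2: "\<kappa> \<ge> 2" using k m1 by linarith
  have "?m * (norm M)^2 \<le> 2 * \<kappa> * (norm M)^2" using k by (intro mult_right_mono) auto
  moreover have "(\<kappa>^2 - 2 * \<kappa>) * ((norm U)^2 - ?m) \<le> 0"
    using k2 u2 by (intro mult_nonneg_nonpos) (auto simp: power2_eq_square)
  moreover have "(\<kappa>^2 - 2 * \<kappa>) * ((norm U)^2 - ?m) = \<kappa>^2 * (norm U)^2 - \<kappa>^2 * ?m - 2 * \<kappa> * (norm U)^2 + 2 * \<kappa> * ?m"
    by (simp add: algebra_simps)
  moreover have "(\<kappa> * sqrt ?m)^2 = \<kappa>^2 * ?m" by (simp add: power_mult_distrib)
  ultimately have "(norm (Nop \<kappa> U))^2 \<le> (\<kappa> * sqrt ?m)^2"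
    using a by (simp only:) (simp add: algebra_simps)
  then show ?thesis using k by (simp add: power2_le_iff_abs_le)
qed



lemma heat_bound:
  fixes g :: "real^'d \<Rightarrow> real^'n^'m"
  assumes e: "\<epsilon> > 0" and t: "t \<ge> 0" and g: "\<And>y. norm (g y) \<le> B"
  shows "norm (heat \<epsilon> t g x) \<le> B"
proof (cases "t = 0")
  case True then show ?thesis by (simp add: heat_def g)
next
  case False
  then have t: "t > 0" using t by simp
  have B: "B \<ge> 0" using g[of 0] norm_ge_zero order_trans by blast
  have nn: "\<And>y. heat_kernel \<epsilon> t (x - y) \<ge> 0" unfolding heat_kernel_def by simp
  have hk: "((\<lambda>y. heat_kernel \<epsilon> t (x - y) * B) has_integral 1 * B) UNIV"
    by (rule has_integral_mult_left[OF heat_kernel_has_integral[OF e t]])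
  show ?thesis
  proof (cases "(\<lambda>y. heat_kernel \<epsilon> t (x - y) *\<^sub>R g y) integrable_on UNIV")
    case True
    have "norm (integral UNIV (\<lambda>y. heat_kernel \<epsilon> t (x - y) *\<^sub>R g y)) \<le> integral UNIV (\<lambda>y. heat_kernel \<epsilon> t (x - y) * B)"
      apply (rule Henstock_Kurzweil_Integration.integral_norm_bound_integral[OF True])
      using hk apply blast
      using nn g by (simp add: mult_left_mono)
    also have "\<dots> = 1 * B" by (rule integral_unique[OF hk])
    finally show ?thesis using t by (simp add: heat_def)
  next
    case False
    then show ?thesis using t B by (simp add: heat_def not_integrable_integral)
  qed
qed

lemma semi_bound:
  fixes g :: "real^'d \<Rightarrow> real^'n^'m"
  assumes e: "\<epsilon> > 0" and t: "t \<ge> 0" and g: "\<And>y. norm (g y) \<le> B"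
  shows "norm (semi \<epsilon> \<kappa> t g x) \<le> exp (- \<kappa> * t) * B"
  unfolding semi_def using heat_bound[OF e t g, where x=x] by (simp add: mult_left_mono)

lemma exp_int:
  fixes \<kappa> s c :: real
  assumes k: "\<kappa> > 0" and s: "s \<ge> 0"
  shows "((\<lambda>\<sigma>. exp (- \<kappa> * (s - \<sigma>)) * (\<kappa> * c)) has_integral (c * (1 - exp (- \<kappa> * s)))) {0..s}"
proof -
  have "((\<lambda>\<sigma>. exp (- \<kappa> * (s - \<sigma>)) * (\<kappa> * c)) has_integral ((\<lambda>\<sigma>. c * exp (- \<kappa> * (s - \<sigma>))) s - (\<lambda>\<sigma>. c * exp (- \<kappa> * (s - \<sigma>))) 0)) {0..s}"
    apply (rule fundamental_theorem_of_calculus[OF s])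
    unfolding has_vector_derivative_def
    by (auto intro!: derivative_eq_intros simp: algebra_simps)
  then show ?thesis by (simp add: algebra_simps)
qed

lemma duhamel_bound:
  fixes U0 :: "real^'d \<Rightarrow> real^'n^'m"
  assumes e: "\<epsilon> > 0" and k: "\<kappa> > 0" and s: "s \<ge> 0" and c: "c \<ge> 0"
    and U0: "\<And>y. norm (U0 y) \<le> c"
    and G: "\<And>\<sigma> y. \<sigma> \<in> {0..s} \<Longrightarrow> norm (G \<sigma> y) \<le> \<kappa> * c"
  shows "norm (duhamel \<epsilon> \<kappa> U0 G s x) \<le> c"
proof -
  have i: "norm (integral {0..s} (\<lambda>\<sigma>. semi \<epsilon> \<kappa> (s - \<sigma>) (G \<sigma>) x)) \<le> c * (1 - exp (- \<kappa> * s))"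
  proof (cases "(\<lambda>\<sigma>. semi \<epsilon> \<kappa> (s - \<sigma>) (G \<sigma>) x) integrable_on {0..s}")
    case True
    have "norm (integral {0..s} (\<lambda>\<sigma>. semi \<epsilon> \<kappa> (s - \<sigma>) (G \<sigma>) x)) \<le> integral {0..s} (\<lambda>\<sigma>. exp (- \<kappa> * (s - \<sigma>)) * (\<kappa> * c))"
      apply (rule Henstock_Kurzweil_Integration.integral_norm_bound_integral[OF True])
      using exp_int[OF k s, of c] apply blast
      apply (rule semi_bound[OF e]) using G by auto
    also have "\<dots> = c * (1 - exp (- \<kappa> * s))" by (rule integral_unique[OF exp_int[OF k s, of c]])
    finally show ?thesis .
  next
    case False
    have "exp (- \<kappa> * s) \<le> 1" using k s by simp
    then show ?thesis using False c by (simp add: not_integrable_integral)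
  qed
  have "norm (duhamel \<epsilon> \<kappa> U0 G s x) \<le> norm (semi \<epsilon> \<kappa> s U0 x) + norm (integral {0..s} (\<lambda>\<sigma>. semi \<epsilon> \<kappa> (s - \<sigma>) (G \<sigma>) x))"
    unfolding duhamel_def by (rule norm_triangle_ineq)
  also have "\<dots> \<le> exp (- \<kappa> * s) * c + c * (1 - exp (- \<kappa> * s))"
    by (intro add_mono semi_bound[OF e s U0] i)
  finally show ?thesis by (simp add: algebra_simps)
qed

lemma duhamel_0: "duhamel \<epsilon> \<kappa> U0 G 0 x = U0 x"
  by (simp add: duhamel_def semi_def heat_def)



lemma lagr_cont: "continuous_on S (lagr a j \<tau> k)"
  unfolding lagr_def divide_inverse by (intro continuous_intros)

lemma Pint_cont: "continuous_on S (\<lambda>s. Pint a \<kappa> \<tau> j Vn W s x)"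
  unfolding Pint_def by (intro continuous_intros lagr_cont)

lemma bdd_norm_cont:
  fixes f :: "real \<Rightarrow> 'v::real_normed_vector"
  assumes "continuous_on {a..b} f"
  shows "bdd_above ((\<lambda>s. norm (f s)) ` {a..b})"
proof -
  have "compact (f ` {a..b})" by (rule compact_continuous_image[OF assms compact_Icc])
  then have "bounded (f ` {a..b})" by (rule compact_imp_bounded)
  then obtain B where "\<forall>y\<in>f ` {a..b}. norm y \<le> B" by (auto simp: bounded_iff)
  then show ?thesis by (auto intro!: bdd_aboveI[where M=B])
qed

lemma alpha_facts:
  fixes P :: "real \<Rightarrow> real^'d \<Rightarrow> real^'n^'m"
  assumes t: "\<tau> \<ge> 0" and k: "\<kappa> \<ge> 0" and c: "continuous_on {0..\<tau>} (\<lambda>s. P s x)"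
  shows "\<And>\<sigma>. \<sigma> \<in> {0..\<tau>} \<Longrightarrow> norm (alpha \<kappa> \<tau> P x *\<^sub>R P \<sigma> x) \<le> \<kappa> * sqrt (real CARD('n))"
    and "(SUP s\<in>{0..\<tau>}. norm (P s x)) \<le> \<kappa> * sqrt (real CARD('n)) \<Longrightarrow> alpha \<kappa> \<tau> P x = 1"
    and "\<And>s D. s \<in> {0..\<tau>} \<Longrightarrow> D \<ge> 0 \<Longrightarrow> (SUP s\<in>{0..\<tau>}. norm (P s x)) \<le> \<kappa> * sqrt (real CARD('n)) + D
          \<Longrightarrow> norm (P s x - alpha \<kappa> \<tau> P x *\<^sub>R P s x) \<le> D"
proof -
  define M where "M = (SUP s\<in>{0..\<tau>}. norm (P s x))"
  define K where "K = \<kappa> * sqrt (real CARD('n))"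
  have K0: "K \<ge> 0" using k by (simp add: K_def)
  have bdd: "bdd_above ((\<lambda>s. norm (P s x)) ` {0..\<tau>})" by (rule bdd_norm_cont[OF c])
  have le: "\<And>s. s \<in> {0..\<tau>} \<Longrightarrow> norm (P s x) \<le> M"
    unfolding M_def by (rule cSUP_upper[OF _ bdd])
  have M0: "M \<ge> 0" using le[of 0] t by (auto intro: order_trans[OF norm_ge_zero])
  have al: "alpha \<kappa> \<tau> P x = (if M = 0 then 1 else min (K / M) 1)"
    by (simp add: alpha_def M_def K_def Let_def)
  show "norm (alpha \<kappa> \<tau> P x *\<^sub>R P \<sigma> x) \<le> \<kappa> * sqrt (real CARD('n))" if s: "\<sigma> \<in> {0..\<tau>}" for \<sigma>
  proof (cases "M = 0")
    case True then show ?thesis using le[OF s] K0 by (simp add: al K_def)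
  next
    case False
    then have Mp: "M > 0" using M0 by simp
    have a0: "0 \<le> min (K / M) 1" using K0 Mp by simp
    have "norm (alpha \<kappa> \<tau> P x *\<^sub>R P \<sigma> x) = min (K / M) 1 * norm (P \<sigma> x)"
      using False a0 by (simp add: al)
    also have "\<dots> \<le> (K / M) * M"
      by (rule mult_mono) (use a0 le[OF s] K0 Mp in auto)
    also have "\<dots> = K" using Mp by simp
    finally show ?thesis by (simp add: K_def)
  qed
  show one: "alpha \<kappa> \<tau> P x = 1" if "(SUP s\<in>{0..\<tau>}. norm (P s x)) \<le> \<kappa> * sqrt (real CARD('n))"
  proof -
    have "M \<le> K" using that by (simp add: M_def K_def)
    then show ?thesis using M0 by (auto simp: al min_def field_simps)
  qed
  show "norm (P s x - alpha \<kappa> \<tau> P x *\<^sub>R P s x) \<le> D"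
    if s: "s \<in> {0..\<tau>}" and D: "D \<ge> 0" and MD: "(SUP s\<in>{0..\<tau>}. norm (P s x)) \<le> \<kappa> * sqrt (real CARD('n)) + D" for s D
  proof (cases "M \<le> K")
    case True
    then have "alpha \<kappa> \<tau> P x = 1" using one by (simp add: M_def K_def)
    then show ?thesis using D by simp
  next
    case False
    then have Mp: "M > 0" using K0 by simp
    have a: "alpha \<kappa> \<tau> P x = K / M" using False Mp by (simp add: al min_def)
    have a1: "1 - K / M \<ge> 0" using False Mp by simp
    have "norm (P s x - alpha \<kappa> \<tau> P x *\<^sub>R P s x) = norm ((1 - K / M) *\<^sub>R P s x)"
      by (simp add: a algebra_simps)
    also have "\<dots> = (1 - K / M) * norm (P s x)" using a1 by simp
    also have "\<dots> \<le> (1 - K / M) * M" by (rule mult_left_mono[OF le[OF s] a1])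
    also have "\<dots> = M - K" using Mp by (simp add: field_simps)
    also have "\<dots> \<le> D" using MD by (simp add: M_def K_def)
    finally show ?thesis .
  qed
qed

lemma lagr_unif_bound:
  assumes t: "\<tau> > 0" and r: "r \<ge> 1" and k: "k \<le> r" and s: "0 \<le> s" "s \<le> \<tau>"
  shows "\<bar>lagr unif_nodes r \<tau> k s\<bar> \<le> real r ^ r"
proof -
  have rp: "real r > 0" using r by simp
  have f: "\<bar>(s - unif_nodes r i * \<tau>) / (unif_nodes r k * \<tau> - unif_nodes r i * \<tau>)\<bar> \<le> real r"
    if i: "i \<in> {0..r} - {k}" for i
  proof -
    have ir: "real i \<le> real r" using i by simp
    have n1: "\<bar>s - real i / real r * \<tau>\<bar> \<le> \<tau>"
    proof -
      have "real i / real r * \<tau> \<le> \<tau>" using ir rp t by (simp add: field_simps)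
      moreover have "0 \<le> real i / real r * \<tau>" using t by simp
      ultimately show ?thesis using s by linarith
    qed
    have d: "\<bar>real k - real i\<bar> \<ge> 1" using i by auto
    have n2a: "real k / real r * \<tau> - real i / real r * \<tau> = (real k - real i) * \<tau> / real r"
      using rp by (simp add: field_simps)
    have n2: "\<bar>real k / real r * \<tau> - real i / real r * \<tau>\<bar> = \<bar>real k - real i\<bar> * \<tau> / real r"
      unfolding n2a using t rp by (simp add: abs_mult abs_divide)
    have n3: "\<bar>real k - real i\<bar> * \<tau> / real r \<ge> \<tau> / real r"
      using d t rp by (simp add: divide_right_mono)
    have "\<bar>(s - real i / real r * \<tau>) / (real k / real r * \<tau> - real i / real r * \<tau>)\<bar>
        = \<bar>s - real i / real r * \<tau>\<bar> / (\<bar>real k - real i\<bar> * \<tau> / real r)"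
      by (simp only: abs_divide n2)
    also have "\<dots> \<le> \<tau> / (\<tau> / real r)"
      apply (rule frac_le) using n1 n3 t rp by auto
    also have "\<dots> = real r" using t by simp
    finally show ?thesis by (simp add: unif_nodes_def)
  qed
  have "\<bar>lagr unif_nodes r \<tau> k s\<bar> = (\<Prod>i\<in>{0..r} - {k}. \<bar>(s - unif_nodes r i * \<tau>) / (unif_nodes r k * \<tau> - unif_nodes r i * \<tau>)\<bar>)"
    by (simp add: lagr_def abs_prod)
  also have "\<dots> \<le> (\<Prod>i\<in>{0..r} - {k}. real r)"
    by (rule prod_mono) (use f in auto)
  also have "\<dots> = real r ^ r" using k by simp
  finally show ?thesis .
qed

lemma lagr_node:
  assumes inj: "inj_on (\<lambda>i. a j i * \<tau>) {0..j}" and k: "k \<le> j" and m: "m \<le> j"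
  shows "lagr a j \<tau> k (a j m * \<tau>) = (if k = m then 1 else 0)"
proof (cases "k = m")
  case True
  have "\<And>i. i \<in> {0..j} - {k} \<Longrightarrow> a j k * \<tau> \<noteq> a j i * \<tau>"
    using inj k by (auto dest: inj_onD)
  then have "\<forall>i\<in>{0..j} - {k}. (a j m * \<tau> - a j i * \<tau>) / (a j k * \<tau> - a j i * \<tau>) = 1"
    using True by auto
  then show ?thesis using True unfolding lagr_def by (simp add: prod.neutral)
next
  case False
  then show ?thesis unfolding lagr_def using m
    by (simp add: prod_zero_iff) (rule bexI[of _ m], auto)
qed

definition Lpoly :: "(nat \<Rightarrow> nat \<Rightarrow> real) \<Rightarrow> nat \<Rightarrow> real \<Rightarrow> nat \<Rightarrow> real poly" where
  "Lpoly a j \<tau> k = (\<Prod>i\<in>{0..j} - {k}. smult (1 / (a j k * \<tau> - a j i * \<tau>)) [:- (a j i * \<tau>), 1:])"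

lemma poly_Lpoly: "poly (Lpoly a j \<tau> k) s = lagr a j \<tau> k s"
  unfolding Lpoly_def lagr_def poly_prod by (intro prod.cong refl) (simp add: divide_inverse algebra_simps)

lemma degree_Lpoly: "k \<le> j \<Longrightarrow> degree (Lpoly a j \<tau> k) \<le> j"
proof -
  assume k: "k \<le> j"
  have "degree (Lpoly a j \<tau> k) \<le> (\<Sum>i\<in>{0..j} - {k}. degree (smult (1 / (a j k * \<tau> - a j i * \<tau>)) [:- (a j i * \<tau>), 1:]))"
    unfolding Lpoly_def using degree_prod_sum_le[of "{0..j} - {k}" "\<lambda>i. smult (1 / (a j k * \<tau> - a j i * \<tau>)) [:- (a j i * \<tau>), 1:]"]
    by (simp add: o_def)
  also have "\<dots> \<le> (\<Sum>i\<in>{0..j} - {k}. 1)"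
    by (intro sum_mono) (simp add: degree_smult_le order_trans[OF degree_smult_le])
  also have "\<dots> = j" using k by simp
  finally show ?thesis .
qed

lemma lagr_reproduce:
  assumes inj: "inj_on (\<lambda>i. a j i * \<tau>) {0..j}" and p: "degree p \<le> j"
  shows "(\<Sum>k=0..j. lagr a j \<tau> k s * poly p (a j k * \<tau>)) = poly p s"
proof -
  define q where "q = (\<Sum>k=0..j. smult (poly p (a j k * \<tau>)) (Lpoly a j \<tau> k)) - p"
  have dq: "degree q \<le> j"
    unfolding q_def
    by (intro degree_diff_le degree_sum_le p order_trans[OF degree_smult_le] degree_Lpoly) auto
  have root: "poly q (a j m * \<tau>) = 0" if m: "m \<le> j" for m
  proof -
    have "poly q (a j m * \<tau>) = (\<Sum>k=0..j. poly p (a j k * \<tau>) * (if k = m then 1 else 0)) - poly p (a j m * \<tau>)"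
      unfolding q_def by (simp add: poly_sum poly_Lpoly lagr_node[where a=a and j=j and \<tau>=\<tau>, OF inj _ m])
    also have "\<dots> = 0" using m by (simp add: if_distrib cong: if_cong)
    finally show ?thesis .
  qed
  have "q = 0"
  proof (rule ccontr)
    assume q0: "q \<noteq> 0"
    have "(\<lambda>i. a j i * \<tau>) ` {0..j} \<subseteq> {x. poly q x = 0}" using root by auto
    then have "card ((\<lambda>i. a j i * \<tau>) ` {0..j}) \<le> card {x. poly q x = 0}"
      by (intro card_mono poly_roots_finite q0)
    also have "\<dots> \<le> degree q" by (rule card_poly_roots_bound[OF q0])
    finally have "card ((\<lambda>i. a j i * \<tau>) ` {0..j}) \<le> j" using dq by simp
    moreover have "card ((\<lambda>i. a j i * \<tau>) ` {0..j}) = Suc j" by (simp add: card_image[OF inj])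
    ultimately show False by simp
  qed
  then have "poly q s = 0" by simp
  then show ?thesis unfolding q_def by (simp add: poly_sum poly_Lpoly mult.commute)
qed

lemma unif_inj: "\<tau> > 0 \<Longrightarrow> j \<ge> 1 \<Longrightarrow> inj_on (\<lambda>i. unif_nodes j i * \<tau>) {0..j}"
  by (auto simp: inj_on_def unif_nodes_def)

lemma lagr_reproduce_vec:
  fixes c :: "nat \<Rightarrow> 'v::real_vector"
  assumes inj: "inj_on (\<lambda>i. a j i * \<tau>) {0..j}"
  shows "(\<Sum>k=0..j. lagr a j \<tau> k s *\<^sub>R (\<Sum>i<Suc j. ((a j k * \<tau>) ^ i / fact i) *\<^sub>R c i))
       = (\<Sum>i<Suc j. (s ^ i / fact i) *\<^sub>R c i)"
proof -
  have mon: "(\<Sum>k=0..j. lagr a j \<tau> k s * (a j k * \<tau>) ^ i) = s ^ i" if "i < Suc j" for i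
    using lagr_reproduce[where a=a and j=j and \<tau>=\<tau> and p="monom 1 i" and s=s, OF inj] that by (simp add: poly_monom degree_monom_eq)
  have "(\<Sum>k=0..j. lagr a j \<tau> k s *\<^sub>R (\<Sum>i<Suc j. ((a j k * \<tau>) ^ i / fact i) *\<^sub>R c i))
      = (\<Sum>k=0..j. \<Sum>i<Suc j. (lagr a j \<tau> k s * (a j k * \<tau>) ^ i / fact i) *\<^sub>R c i)"
    by (rule sum.cong[OF refl]) (simp only: scaleR_sum_right scaleR_scaleR times_divide_eq_right)
  also have "\<dots> = (\<Sum>i<Suc j. \<Sum>k=0..j. (lagr a j \<tau> k s * (a j k * \<tau>) ^ i / fact i) *\<^sub>R c i)"
    by (rule sum.swap)
  also have "\<dots> = (\<Sum>i<Suc j. ((\<Sum>k=0..j. lagr a j \<tau> k s * (a j k * \<tau>) ^ i) / fact i) *\<^sub>R c i)"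
    by (simp add: scaleR_sum_left sum_divide_distrib)
  also have "\<dots> = (\<Sum>i<Suc j. (s ^ i / fact i) *\<^sub>R c i)"
    by (intro sum.cong refl) (simp add: mon)
  finally show ?thesis .
qed



lemma transpose_add: "transpose (A + B) = transpose A + transpose (B::real^'n^'m)"
  by (simp add: transpose_def vec_eq_iff)

lemma bb_mult: "bounded_bilinear (\<lambda>(A::real^'n^'m) (B::real^'k^'n). A ** B)"
proof
  show "\<exists>K. \<forall>a b. norm ((a::real^'n^'m) ** (b::real^'k^'n)) \<le> norm a * norm b * K"
    by (rule exI[of _ 1]) (simp add: norm_mmult)
qed (simp_all add: matrix_add_ldistrib matrix_add_rdistrib' matrix_scaleR_left matrix_scaleR_right)

lemma bb_multT: "bounded_bilinear (\<lambda>(A::real^'n^'m) (B::real^'n^'k). A ** transpose B)"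
proof
  show "\<exists>K. \<forall>a b. norm ((a::real^'n^'m) ** transpose (b::real^'n^'k)) \<le> norm a * norm b * K"
    by (rule exI[of _ 1]) (simp add: norm_transpose order_trans[OF norm_mmult])
qed (simp_all add: matrix_add_ldistrib matrix_add_rdistrib' matrix_scaleR_left matrix_scaleR_right
       transpose_add transpose_scalar)

lemma binom_sum_shift:
  fixes T :: "nat \<Rightarrow> 'v::real_vector"
  shows "(\<Sum>i\<le>n. real (n choose i) *\<^sub>R (T (Suc i) + T i)) = (\<Sum>i\<le>Suc n. real (Suc n choose i) *\<^sub>R T i)"
proof -
  have a: "(\<Sum>i\<le>Suc n. real (n choose i) *\<^sub>R T i) = (\<Sum>i\<le>n. real (n choose i) *\<^sub>R T i)"
    by simp
  have b: "(\<Sum>i\<le>Suc n. real (n choose i) *\<^sub>R T i) = T 0 + (\<Sum>i\<le>n. real (n choose Suc i) *\<^sub>R T (Suc i))"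
    by (subst sum.atMost_Suc_shift) simp
  have "(\<Sum>i\<le>Suc n. real (Suc n choose i) *\<^sub>R T i) = T 0 + (\<Sum>i\<le>n. real (Suc n choose Suc i) *\<^sub>R T (Suc i))"
    by (subst sum.atMost_Suc_shift) simp
  also have "\<dots> = T 0 + (\<Sum>i\<le>n. real (n choose i) *\<^sub>R T (Suc i)) + (\<Sum>i\<le>n. real (n choose Suc i) *\<^sub>R T (Suc i))"
    by (simp add: scaleR_add_left sum.distrib)
  also have "\<dots> = (\<Sum>i\<le>n. real (n choose i) *\<^sub>R T (Suc i)) + (\<Sum>i\<le>n. real (n choose i) *\<^sub>R T i)"
    using a b by (simp add: algebra_simps binomial_eq_0)
  also have "\<dots> = (\<Sum>i\<le>n. real (n choose i) *\<^sub>R (T (Suc i) + T i))"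
    by (simp add: scaleR_add_right sum.distrib)
  finally show ?thesis by simp
qed

definition leib :: "('a \<Rightarrow> 'b \<Rightarrow> 'c::real_vector) \<Rightarrow> (nat \<Rightarrow> real \<Rightarrow> 'a) \<Rightarrow> (nat \<Rightarrow> real \<Rightarrow> 'b) \<Rightarrow> nat \<Rightarrow> real \<Rightarrow> 'c" where
  "leib pr F G n t = (\<Sum>i\<le>n. real (n choose i) *\<^sub>R pr (F i t) (G (n - i) t))"

lemma leibniz:
  assumes bb: "bounded_bilinear pr"
    and F: "\<And>m t. m < p \<Longrightarrow> t \<in> S \<Longrightarrow> (F m has_vector_derivative F (Suc m) t) (at t within S)"
    and G: "\<And>m t. m < p \<Longrightarrow> t \<in> S \<Longrightarrow> (G m has_vector_derivative G (Suc m) t) (at t within S)"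
    and n: "n < p" and t: "t \<in> S"
  shows "(leib pr F G n has_vector_derivative leib pr F G (Suc n) t) (at t within S)"
proof -
  have d: "((\<lambda>t. pr (F i t) (G (n - i) t)) has_vector_derivative
            (pr (F i t) (G (Suc (n - i)) t) + pr (F (Suc i) t) (G (n - i) t))) (at t within S)"
    if i: "i \<le> n" for i
    using bounded_bilinear.has_vector_derivative[OF bb F[of i t] G[of "n - i" t]] i n t by simp
  have "(leib pr F G n has_vector_derivative
      (\<Sum>i\<le>n. real (n choose i) *\<^sub>R (pr (F i t) (G (Suc (n - i)) t) + pr (F (Suc i) t) (G (n - i) t)))) (at t within S)"
    unfolding leib_def[abs_def]
    by (intro has_vector_derivative_sum bounded_linear.has_vector_derivative[OF bounded_linear_scaleR_right] d) auto
  moreover have "(\<Sum>i\<le>n. real (n choose i) *\<^sub>R (pr (F i t) (G (Suc (n - i)) t) + pr (F (Suc i) t) (G (n - i) t)))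
      = leib pr F G (Suc n) t"
  proof -
    define T where "T i = pr (F i t) (G (Suc n - i) t)" for i
    have "(\<Sum>i\<le>n. real (n choose i) *\<^sub>R (pr (F i t) (G (Suc (n - i)) t) + pr (F (Suc i) t) (G (n - i) t)))
        = (\<Sum>i\<le>n. real (n choose i) *\<^sub>R (T (Suc i) + T i))"
      by (intro sum.cong refl) (simp add: T_def Suc_diff_le add.commute)
    also have "\<dots> = (\<Sum>i\<le>Suc n. real (Suc n choose i) *\<^sub>R T i)" by (rule binom_sum_shift)
    finally show ?thesis by (simp add: leib_def T_def)
  qed
  ultimately show ?thesis by simp
qed

lemma leib_bound:
  assumes pr: "\<And>a b. norm (pr a b) \<le> norm a * norm b"
    and F: "\<And>i. i \<le> n \<Longrightarrow> norm (F i t) \<le> B1"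
    and G: "\<And>i. i \<le> n \<Longrightarrow> norm (G i t) \<le> B2"
  shows "norm (leib pr F G n t) \<le> 2 ^ n * (B1 * B2)"
proof -
  have B1: "B1 \<ge> 0" using F[of 0] by (auto intro: order_trans[OF norm_ge_zero])
  have "norm (leib pr F G n t) \<le> (\<Sum>i\<le>n. norm (real (n choose i) *\<^sub>R pr (F i t) (G (n - i) t)))"
    unfolding leib_def by (rule norm_sum)
  also have "\<dots> \<le> (\<Sum>i\<le>n. real (n choose i) * (B1 * B2))"
  proof (intro sum_mono)
    fix i assume i: "i \<in> {..n}"
    have "norm (pr (F i t) (G (n - i) t)) \<le> B1 * B2"
    proof -
      have "norm (F i t) * norm (G (n - i) t) \<le> B1 * B2"
        by (rule mult_mono) (use F[of i] G[of "n - i"] i B1 in auto)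
      then show ?thesis using pr[of "F i t" "G (n - i) t"] by linarith
    qed
    then show "norm (real (n choose i) *\<^sub>R pr (F i t) (G (n - i) t)) \<le> real (n choose i) * (B1 * B2)"
      by (simp add: mult_left_mono)
  qed
  also have "\<dots> = 2 ^ n * (B1 * B2)"
  proof -
    have cr: "(\<Sum>i\<le>n. real (n choose i)) = 2 ^ n"
    proof -
      have "(\<Sum>i\<le>n. real (n choose i)) = real (\<Sum>i\<le>n. n choose i)" by (simp only: of_nat_sum)
      then show ?thesis by (simp add: choose_row_sum)
    qed
    show ?thesis by (simp add: sum_distrib_right[symmetric] cr)
  qed
  finally show ?thesis .
qed

lemma bl_eval: "bounded_linear (\<lambda>f::('a::topological_space \<Rightarrow>\<^sub>C 'b::real_normed_vector). apply_bcontfun f x)"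
  by (rule bounded_linear_intro[where K=1]) (auto simp: norm_bounded)

lemma taylor_rem:
  fixes V :: "nat \<Rightarrow> real \<Rightarrow> 'v::banach"
  assumes V: "\<And>m t. m < Suc r \<Longrightarrow> t \<in> {0..T} \<Longrightarrow> (V m has_vector_derivative V (Suc m) t) (at t within {0..T})"
    and Vb: "\<And>t. t \<in> {0..T} \<Longrightarrow> norm (V (Suc r) t) \<le> K"
    and tn: "0 \<le> tn" and s: "0 \<le> \<sigma>" "tn + \<sigma> \<le> T"
  shows "norm (V 0 (tn + \<sigma>) - (\<Sum>i<Suc r. (\<sigma> ^ i / fact i) *\<^sub>R V i tn)) \<le> K * \<sigma> ^ Suc r / fact r"
proof -
  have sub: "{tn..tn + \<sigma>} \<subseteq> {0..T}" using tn s by auto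
  have D: "\<And>m t. m < Suc r \<Longrightarrow> tn \<le> t \<Longrightarrow> t \<le> tn + \<sigma> \<Longrightarrow>
      (V m has_vector_derivative V (Suc m) t) (at t within {tn..tn + \<sigma>})"
    using V sub by (meson atLeastAtMost_iff has_vector_derivative_within_subset subsetD)
  have hi: "((\<lambda>x. ((tn + \<sigma> - x) ^ (Suc r - 1) / fact (Suc r - 1)) *\<^sub>R V (Suc r) x) has_integral
       V 0 (tn + \<sigma>) - (\<Sum>i<Suc r. ((tn + \<sigma> - tn) ^ i / fact i) *\<^sub>R V i tn)) {tn..tn + \<sigma>}"
    by (rule Taylor_has_integral[of "Suc r" V "V 0" tn "tn + \<sigma>"]) (use D s in auto)
  have K0: "K \<ge> 0" using Vb[of tn] tn s by (auto intro: order_trans[OF norm_ge_zero])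
  have bnd: "norm (((tn + \<sigma> - x) ^ r / fact r) *\<^sub>R V (Suc r) x) \<le> \<sigma> ^ r / fact r * K"
    if x: "x \<in> {tn..tn + \<sigma>}" for x
  proof -
    have "\<bar>tn + \<sigma> - x\<bar> ^ r \<le> \<sigma> ^ r" using x by (intro power_mono) auto
    moreover have "norm (V (Suc r) x) \<le> K" using Vb x sub by auto
    moreover have "\<sigma> ^ r \<ge> 0" using s by simp
    ultimately show ?thesis
      by (auto simp: abs_mult power_abs intro!: mult_mono divide_right_mono)
  qed
  have "norm (V 0 (tn + \<sigma>) - (\<Sum>i<Suc r. (\<sigma> ^ i / fact i) *\<^sub>R V i tn)) \<le> \<sigma> ^ r / fact r * K * measure lborel {tn..tn + \<sigma>}"
  proof -
    have hi2: "((\<lambda>x. ((tn + \<sigma> - x) ^ r / fact r) *\<^sub>R V (Suc r) x) has_integral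
       V 0 (tn + \<sigma>) - (\<Sum>i<Suc r. (\<sigma> ^ i / fact i) *\<^sub>R V i tn)) {tn..tn + \<sigma>}"
      using hi by (simp del: sum.lessThan_Suc)
    have B0: "0 \<le> \<sigma> ^ r / fact r * K" using K0 s by simp
    show ?thesis
      by (rule has_integral_bound_real[OF B0 finite.emptyI hi2]) (use bnd in auto)
  qed
  also have "\<dots> = K * \<sigma> ^ Suc r / fact r" using s by simp
  finally show ?thesis .
qed



lemma Wsch_0: "Wsch a \<epsilon> \<kappa> \<tau> Vn j 0 x = Vn x"
  by (cases j) (simp_all add: duhamel_0 Let_def)

lemma Wn_bound:
  fixes Vn :: "real^'d \<Rightarrow> real^'n^'m"
  assumes r: "r \<ge> 1" and k: "\<kappa> \<ge> 3 * real CARD('n) + 1" and e: "\<epsilon> > 0" and t: "\<tau> > 0"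
    and V: "\<And>y. norm (Vn y) \<le> sqrt (real CARD('n))" and s: "\<sigma> \<in> {0..\<tau>}"
  shows "norm (Wn unif_nodes \<epsilon> \<kappa> \<tau> Vn r \<sigma> x) \<le> sqrt (real CARD('n))"
proof -
  have kp: "\<kappa> > 0" using k by (smt (verit) of_nat_0_le_iff)
  have s0: "\<sigma> \<ge> 0" using s by simp
  show ?thesis
  proof (cases "r = 1")
    case True
    show ?thesis unfolding Wn_def True
      by (simp, rule duhamel_bound[OF e kp s0 _ V]) (use Nop_bound[OF V k] in auto)
  next
    case False
    then obtain j where j: "r = Suc (Suc j)" using r by (metis One_nat_def Suc_le_D Suc_le_lessD less_Suc_eq_0_disj not0_implies_Suc)
    define P where "P = Pint unif_nodes \<kappa> \<tau> (Suc j) Vn (Wsch unif_nodes \<epsilon> \<kappa> \<tau> Vn j)"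
    have "norm (duhamel \<epsilon> \<kappa> Vn (\<lambda>\<sigma> x. alpha \<kappa> \<tau> P x *\<^sub>R P \<sigma> x) \<sigma> x) \<le> sqrt (real CARD('n))"
    proof (rule duhamel_bound[OF e kp s0 _ V])
      show "0 \<le> sqrt (real CARD('n))" by simp
      fix \<sigma>' y assume "\<sigma>' \<in> {0..\<sigma>}"
      then have "\<sigma>' \<in> {0..\<tau>}" using s by auto
      then show "norm (alpha \<kappa> \<tau> P y *\<^sub>R P \<sigma>' y) \<le> \<kappa> * sqrt (real CARD('n))"
        using alpha_facts(1)[where \<tau>=\<tau> and \<kappa>=\<kappa> and P=P and x=y] t kp unfolding P_def by (auto intro: Pint_cont)
    qed
    then show ?thesis unfolding Wn_def j by (simp add: P_def Let_def)
  qed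
qed

lemma partI:
  fixes Vn :: "real^'d \<Rightarrow> real^'n^'m"
  assumes k: "\<kappa> \<ge> 0" and t: "\<tau> > 0"
    and M: "(SUP s\<in>{0..\<tau>}. norm (Pn unif_nodes \<epsilon> \<kappa> \<tau> Vn r s x)) \<le> \<kappa> * sqrt (real CARD('n))"
  shows "alphan unif_nodes \<epsilon> \<kappa> \<tau> Vn r x = 1 \<and>
            (\<forall>s. Ptn unif_nodes \<epsilon> \<kappa> \<tau> Vn r s x = Pn unif_nodes \<epsilon> \<kappa> \<tau> Vn r s x)"
proof -
  have c: "continuous_on {0..\<tau>} (\<lambda>s. Pn unif_nodes \<epsilon> \<kappa> \<tau> Vn r s x)"
    unfolding Pn_def by (rule Pint_cont)
  have "alphan unif_nodes \<epsilon> \<kappa> \<tau> Vn r x = 1"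
    unfolding alphan_def using alpha_facts(2)[where \<tau>=\<tau> and \<kappa>=\<kappa> and P="Pn unif_nodes \<epsilon> \<kappa> \<tau> Vn r" and x=x] k c t M by simp
  then show ?thesis by (simp add: Ptn_def)
qed



definition Cf :: "real \<Rightarrow> nat \<Rightarrow> real \<Rightarrow> real" where
  "Cf \<kappa> r K = (1 + real (Suc r) * real r ^ r) * ((\<kappa> + 1) * K + 2 ^ Suc r * (2 ^ Suc r * (K * K) * K)) / fact r"

lemma Ck_bound:
  fixes Ds :: "nat \<Rightarrow> real \<Rightarrow> 'a::real_normed_vector"
  assumes CK: "Ck_derivs (r + 1) T U Ds" and i: "i \<le> Suc r" and t: "t \<in> {0..T}"
  shows "norm (Ds i t) \<le> Ck_norm (r + 1) T Ds"
proof -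
  have cont: "continuous_on {0..T} (Ds i)"
  proof (cases "i < Suc r")
    case True
    have "\<And>t. t \<in> {0..T} \<Longrightarrow> (Ds i has_vector_derivative Ds (Suc i) t) (at t within {0..T})"
      using CK True unfolding Ck_derivs_def by auto
    then show ?thesis
      unfolding continuous_on_eq_continuous_within by (blast intro: has_vector_derivative_continuous)
  next
    case False
    then have "i = r + 1" using i by simp
    then show ?thesis using CK unfolding Ck_derivs_def by simp
  qed
  have "norm (Ds i t) \<le> (SUP t\<in>{0..T}. norm (Ds i t))"
    by (rule cSUP_upper[OF t bdd_norm_cont[OF cont]])
  also have "\<dots> \<le> Ck_norm (r + 1) T Ds"
    unfolding Ck_norm_def by (rule Max_ge) (use i in auto)
  finally show ?thesis .
qed

lemma partII:
  fixes U :: "real \<Rightarrow> ((real^'d) \<Rightarrow>\<^sub>C (real^'n^'m))"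
    and Ds :: "nat \<Rightarrow> real \<Rightarrow> ((real^'d) \<Rightarrow>\<^sub>C (real^'n^'m))"
    and Vn :: "real^'d \<Rightarrow> real^'n^'m"
  assumes r: "r \<ge> 1" and k: "\<kappa> \<ge> 3 * real CARD('n) + 1" and e: "\<epsilon> > 0"
    and CK: "Ck_derivs (r + 1) T U Ds"
    and Ub: "\<forall>t\<in>{0..T}. norm (U t) \<le> sqrt (real CARD('n))"
    and t: "\<tau> > 0" and tn: "tn \<ge> 0" "tn + \<tau> \<le> T"
    and V: "\<forall>y. norm (Vn y) \<le> sqrt (real CARD('n))"
    and s: "s \<in> {0..\<tau>}"
  shows "supnorm (\<lambda>x. Pn unif_nodes \<epsilon> \<kappa> \<tau> Vn r s x - Ptn unif_nodes \<epsilon> \<kappa> \<tau> Vn r s x)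
          \<le> 2 * \<kappa> * real r ^ r *
             (\<Sum>k=0..r. supnorm (\<lambda>x. Wn unif_nodes \<epsilon> \<kappa> \<tau> Vn r (real k * \<tau> / real r) x
                                    - apply_bcontfun (U (tn + real k * \<tau> / real r)) x))
            + Cf \<kappa> r (Ck_norm (r + 1) T Ds) * \<tau> ^ (r + 1)"
proof -
  let ?m = "real CARD('n)"
  let ?c = "sqrt ?m"
  define K where "K = Ck_norm (r + 1) T Ds"
  define K' where "K' = (\<kappa> + 1) * K + 2 ^ Suc r * (2 ^ Suc r * (K * K) * K)"
  define E0 where "E0 = K' * \<tau> ^ Suc r / fact r"
  define nd where "nd k = unif_nodes r k * \<tau>" for k
  define W where "W = Wn unif_nodes \<epsilon> \<kappa> \<tau> Vn r"
  define ee where "ee k = supnorm (\<lambda>x. W (real k * \<tau> / real r) x - apply_bcontfun (U (tn + real k * \<tau> / real r)) x)" for k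
  define Dtot where "Dtot = 2 * \<kappa> * real r ^ r * (\<Sum>k=0..r. ee k) + Cf \<kappa> r K * \<tau> ^ (r + 1)"
  have kp: "\<kappa> > 0" using k by (smt (verit) of_nat_0_le_iff)
  have m1: "?m \<ge> 1" by (simp add: Suc_le_eq)
  have rp: "real r > 0" using r by simp
  have T0: "0 \<in> {0..T}" using tn t by simp
  have Kb: "\<And>i t. i \<le> Suc r \<Longrightarrow> t \<in> {0..T} \<Longrightarrow> norm (Ds i t) \<le> K"
    unfolding K_def by (rule Ck_bound[OF CK])
  have K0: "K \<ge> 0" using Kb[of 0 0] T0 by (auto intro: order_trans[OF norm_ge_zero])
  have K'0: "K' \<ge> 0" unfolding K'_def using K0 kp by simp
  have E00: "E0 \<ge> 0" unfolding E0_def using K'0 t by simp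
  have CfE: "Cf \<kappa> r K * \<tau> ^ (r + 1) = (real (Suc r) * real r ^ r + 1) * E0"
    by (simp add: Cf_def E0_def K'_def algebra_simps)
  have ndk: "real k * \<tau> / real r = nd k" for k by (simp add: nd_def unif_nodes_def)
  have ndin: "k \<le> r \<Longrightarrow> nd k \<in> {0..\<tau>}" for k
    using t rp by (auto simp: nd_def unif_nodes_def field_simps)
  have nd0: "nd 0 = 0" by (simp add: nd_def unif_nodes_def)
  have Wb: "\<And>\<sigma> x. \<sigma> \<in> {0..\<tau>} \<Longrightarrow> norm (W \<sigma> x) \<le> ?c"
    unfolding W_def by (rule Wn_bound[OF r k e t]) (use V in auto)
  have W0: "W 0 x = Vn x" for x by (simp add: W_def Wn_def Wsch_0)
  have Ux: "\<And>t x. t \<in> {0..T} \<Longrightarrow> norm (apply_bcontfun (U t) x) \<le> ?c"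
    using Ub norm_bounded order_trans by blast
  have tnd: "k \<le> r \<Longrightarrow> tn + nd k \<in> {0..T}" for k using ndin[of k] tn by auto
  have ek: "norm (W (nd k) x - apply_bcontfun (U (tn + nd k)) x) \<le> ee k" if kr: "k \<le> r" for k x
  proof -
    have "bdd_above (range (\<lambda>x. norm (W (nd k) x - apply_bcontfun (U (tn + nd k)) x)))"
    proof (rule bdd_aboveI2)
      fix y
      have "norm (W (nd k) y - apply_bcontfun (U (tn + nd k)) y) \<le> norm (W (nd k) y) + norm (apply_bcontfun (U (tn + nd k)) y)"
        by (rule norm_triangle_ineq4)
      also have "\<dots> \<le> ?c + ?c" using Wb[OF ndin[OF kr]] Ux[OF tnd[OF kr]] by (intro add_mono) auto
      finally show "norm (W (nd k) y - apply_bcontfun (U (tn + nd k)) y) \<le> ?c + ?c" .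
    qed
    then show ?thesis unfolding ee_def supnorm_def ndk by (rule cSUP_upper[OF UNIV_I])
  qed
  have ee0: "k \<le> r \<Longrightarrow> ee k \<ge> 0" for k using ek[of k 0] by (auto intro: order_trans[OF norm_ge_zero])
  have Dtot0: "Dtot \<ge> 0"
    unfolding Dtot_def CfE using ee0 kp E00 by (intro add_nonneg_nonneg mult_nonneg_nonneg sum_nonneg) auto
  have main: "norm (Pn unif_nodes \<epsilon> \<kappa> \<tau> Vn r s x - Ptn unif_nodes \<epsilon> \<kappa> \<tau> Vn r s x) \<le> Dtot" for x
  proof -
    define D where "D = (\<lambda>i t. apply_bcontfun (Ds i t) x)"
    define A where "A = leib (\<lambda>(a::real^'n^'m) (b::real^'n^'m). a ** transpose b) D D"
    define Pi where "Pi = leib (\<lambda>(a::real^'m^'m) (b::real^'n^'m). a ** b) A D"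
    define VV where "VV = (\<lambda>n t. (\<kappa> + 1) *\<^sub>R D n t - Pi n t)"
    have dD: "\<And>m t. m < Suc r \<Longrightarrow> t \<in> {0..T} \<Longrightarrow> (D m has_vector_derivative D (Suc m) t) (at t within {0..T})"
      unfolding D_def using CK unfolding Ck_derivs_def
      by (auto intro!: bounded_linear.has_vector_derivative[OF bl_eval])
    have dA: "\<And>m t. m < Suc r \<Longrightarrow> t \<in> {0..T} \<Longrightarrow> (A m has_vector_derivative A (Suc m) t) (at t within {0..T})"
      unfolding A_def by (rule leibniz[where F=D and G=D and p="Suc r" and S="{0..T}", OF bb_multT dD dD]; assumption)
    have dPi: "\<And>m t. m < Suc r \<Longrightarrow> t \<in> {0..T} \<Longrightarrow> (Pi m has_vector_derivative Pi (Suc m) t) (at t within {0..T})"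
      unfolding Pi_def by (rule leibniz[where F=A and G=D and p="Suc r" and S="{0..T}", OF bb_mult dA dD]; assumption)
    have dV: "\<And>m t. m < Suc r \<Longrightarrow> t \<in> {0..T} \<Longrightarrow> (VV m has_vector_derivative VV (Suc m) t) (at t within {0..T})"
      unfolding VV_def
      by (intro has_vector_derivative_diff bounded_linear.has_vector_derivative[OF bounded_linear_scaleR_right] dD dPi)
    have Db: "\<And>i t. i \<le> Suc r \<Longrightarrow> t \<in> {0..T} \<Longrightarrow> norm (D i t) \<le> K"
      unfolding D_def using Kb norm_bounded order_trans by blast
    have Ab: "norm (A n t) \<le> 2 ^ Suc r * (K * K)" if n: "n \<le> Suc r" and tt: "t \<in> {0..T}" for n t
    proof -
      have Dn: "\<And>i. i \<le> n \<Longrightarrow> norm (D i t) \<le> K" using Db n tt by auto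
      have "norm (A n t) \<le> 2 ^ n * (K * K)"
        unfolding A_def
        by (rule leib_bound) (auto simp: norm_transpose intro: order_trans[OF norm_mmult] Dn)
      also have "\<dots> \<le> 2 ^ Suc r * (K * K)"
        using n K0 by (intro mult_right_mono power_increasing) auto
      finally show ?thesis .
    qed
    have Vb: "\<And>t. t \<in> {0..T} \<Longrightarrow> norm (VV (Suc r) t) \<le> K'"
    proof -
      fix t assume tt: "t \<in> {0..T}"
      have "norm (Pi (Suc r) t) \<le> 2 ^ Suc r * (2 ^ Suc r * (K * K) * K)"
        unfolding Pi_def
      proof (rule leib_bound)
        show "\<And>i. i \<le> Suc r \<Longrightarrow> norm (A i t) \<le> 2 ^ Suc r * (K * K)" using Ab tt by blast
        show "\<And>i. i \<le> Suc r \<Longrightarrow> norm (D i t) \<le> K" using Db tt by blast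
      qed (rule norm_mmult)
      moreover have "norm ((\<kappa> + 1) *\<^sub>R D (Suc r) t) \<le> (\<kappa> + 1) * K"
        using Db[of "Suc r" t] tt kp by (simp add: mult_left_mono)
      ultimately show "norm (VV (Suc r) t) \<le> K'"
        unfolding VV_def K'_def by (meson add_mono norm_triangle_ineq4 order_trans)
    qed
    have V0: "VV 0 t = Nop \<kappa> (apply_bcontfun (U t) x)" if tt: "t \<in> {0..T}" for t
    proof -
      have "D 0 t = apply_bcontfun (U t) x" using CK tt unfolding Ck_derivs_def D_def by auto
      then show ?thesis
        unfolding VV_def Pi_def A_def leib_def Nop_def fnl_def by (simp add: algebra_simps)
    qed
    define Tp where "Tp = (\<lambda>\<sigma>. \<Sum>i<Suc r. (\<sigma> ^ i / fact i) *\<^sub>R VV i tn)"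
    define R where "R = (\<lambda>\<sigma>. VV 0 (tn + \<sigma>) - Tp \<sigma>)"
    have Rb: "norm (R \<sigma>) \<le> E0" if sg: "\<sigma> \<in> {0..\<tau>}" for \<sigma>
    proof -
      have "norm (R \<sigma>) \<le> K' * \<sigma> ^ Suc r / fact r"
        unfolding R_def Tp_def by (rule taylor_rem[OF dV Vb]) (use sg tn in auto)
      also have "\<dots> \<le> E0"
      proof -
        have pw: "\<sigma> ^ Suc r \<le> \<tau> ^ Suc r" using sg by (intro power_mono) auto
        show ?thesis unfolding E0_def by (rule divide_right_mono[OF mult_left_mono[OF pw K'0]]) simp
      qed
      finally show ?thesis .
    qed
    define P where "P = (\<lambda>s'. Pn unif_nodes \<epsilon> \<kappa> \<tau> Vn r s' x)"
    have Peq: "P s' = (\<Sum>k=0..r. lagr unif_nodes r \<tau> k s' *\<^sub>R Nop \<kappa> (W (nd k) x))" for s'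
      unfolding P_def Pn_def Pint_def W_def[symmetric] nd_def[symmetric]
      by (intro sum.cong refl) (auto simp: nd0 W0)
    have Pb: "norm (P s') \<le> \<kappa> * ?c + Dtot" if s': "s' \<in> {0..\<tau>}" for s'
    proof -
      define Q where "Q = (\<Sum>k=0..r. lagr unif_nodes r \<tau> k s' *\<^sub>R Nop \<kappa> (apply_bcontfun (U (tn + nd k)) x))"
      have a: "norm (P s' - Q) \<le> 2 * \<kappa> * real r ^ r * (\<Sum>k=0..r. ee k)"
      proof -
        have "P s' - Q = (\<Sum>k=0..r. lagr unif_nodes r \<tau> k s' *\<^sub>R (Nop \<kappa> (W (nd k) x) - Nop \<kappa> (apply_bcontfun (U (tn + nd k)) x)))"
          unfolding Peq Q_def by (simp add: sum_subtractf scaleR_diff_right)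
        also have "norm \<dots> \<le> (\<Sum>k=0..r. norm (lagr unif_nodes r \<tau> k s' *\<^sub>R (Nop \<kappa> (W (nd k) x) - Nop \<kappa> (apply_bcontfun (U (tn + nd k)) x))))"
          by (rule norm_sum)
        also have "\<dots> \<le> (\<Sum>k=0..r. real r ^ r * (2 * \<kappa> * ee k))"
        proof (rule sum_mono)
          fix k assume kk: "k \<in> {0..r}"
          then have kr: "k \<le> r" by simp
          have l: "\<bar>lagr unif_nodes r \<tau> k s'\<bar> \<le> real r ^ r"
            using lagr_unif_bound[OF t r kr] s' by auto
          have "norm (Nop \<kappa> (W (nd k) x) - Nop \<kappa> (apply_bcontfun (U (tn + nd k)) x))
              \<le> (\<kappa> + 1 + 3 * ?m) * norm (W (nd k) x - apply_bcontfun (U (tn + nd k)) x)"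
            by (rule Nop_lipschitz) (use Wb[OF ndin[OF kr]] Ux[OF tnd[OF kr]] kp in auto)
          also have "\<dots> \<le> (2 * \<kappa>) * ee k"
            using ek[OF kr, of x] k by (intro mult_mono) auto
          finally have n: "norm (Nop \<kappa> (W (nd k) x) - Nop \<kappa> (apply_bcontfun (U (tn + nd k)) x)) \<le> 2 * \<kappa> * ee k" .
          show "norm (lagr unif_nodes r \<tau> k s' *\<^sub>R (Nop \<kappa> (W (nd k) x) - Nop \<kappa> (apply_bcontfun (U (tn + nd k)) x)))
              \<le> real r ^ r * (2 * \<kappa> * ee k)"
            using l n by (simp add: mult_mono)
        qed
        also have "\<dots> = 2 * \<kappa> * real r ^ r * (\<Sum>k=0..r. ee k)"
          by (simp add: sum_distrib_left mult_ac)
        finally show ?thesis .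
      qed
      have b: "norm (Q - Nop \<kappa> (apply_bcontfun (U (tn + s')) x)) \<le> Cf \<kappa> r K * \<tau> ^ (r + 1)"
      proof -
        have Nk: "Nop \<kappa> (apply_bcontfun (U (tn + nd k)) x) = Tp (nd k) + R (nd k)" if kr: "k \<le> r" for k
          using V0[OF tnd[OF kr]] by (simp add: R_def)
        have "Q = (\<Sum>k=0..r. lagr unif_nodes r \<tau> k s' *\<^sub>R Tp (nd k)) + (\<Sum>k=0..r. lagr unif_nodes r \<tau> k s' *\<^sub>R R (nd k))"
          unfolding Q_def by (simp add: Nk scaleR_add_right sum.distrib)
        also have "(\<Sum>k=0..r. lagr unif_nodes r \<tau> k s' *\<^sub>R Tp (nd k)) = Tp s'"
          unfolding Tp_def nd_def by (rule lagr_reproduce_vec[where a=unif_nodes and j=r and \<tau>=\<tau>, OF unif_inj[OF t r]])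
        finally have Qe: "Q = Tp s' + (\<Sum>k=0..r. lagr unif_nodes r \<tau> k s' *\<^sub>R R (nd k))" .
        have Ne: "Nop \<kappa> (apply_bcontfun (U (tn + s')) x) = Tp s' + R s'"
          using V0[of "tn + s'"] s' tn by (simp add: R_def)
        have "Q - Nop \<kappa> (apply_bcontfun (U (tn + s')) x) = (\<Sum>k=0..r. lagr unif_nodes r \<tau> k s' *\<^sub>R R (nd k)) - R s'"
          unfolding Qe Ne by simp
        also have "norm \<dots> \<le> (\<Sum>k=0..r. norm (lagr unif_nodes r \<tau> k s' *\<^sub>R R (nd k))) + norm (R s')"
          by (rule order_trans[OF norm_triangle_ineq4], rule add_right_mono, rule norm_sum)
        also have "\<dots> \<le> (\<Sum>k=0..r. real r ^ r * E0) + E0"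
        proof (intro add_mono sum_mono Rb s')
          fix k assume "k \<in> {0..r}"
          then have kr: "k \<le> r" by simp
          have l: "\<bar>lagr unif_nodes r \<tau> k s'\<bar> \<le> real r ^ r"
            using lagr_unif_bound[OF t r kr] s' by auto
          show "norm (lagr unif_nodes r \<tau> k s' *\<^sub>R R (nd k)) \<le> real r ^ r * E0"
            using l Rb[OF ndin[OF kr]] by (simp add: mult_mono)
        qed
        also have "\<dots> = Cf \<kappa> r K * \<tau> ^ (r + 1)" unfolding CfE by (simp add: algebra_simps)
        finally show ?thesis .
      qed
      have c: "norm (Nop \<kappa> (apply_bcontfun (U (tn + s')) x)) \<le> \<kappa> * ?c"
        by (rule Nop_bound[OF _ k]) (use Ux[of "tn + s'"] s' tn in auto)
      have tri: "norm (a + b + cc) \<le> norm a + norm b + norm cc" for a b cc :: "real^'n^'m"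
        using norm_triangle_ineq[of "a + b" cc] norm_triangle_ineq[of a b] by linarith
      have "norm (P s') \<le> norm (P s' - Q) + norm (Q - Nop \<kappa> (apply_bcontfun (U (tn + s')) x)) + norm (Nop \<kappa> (apply_bcontfun (U (tn + s')) x))"
        using tri[of "P s' - Q" "Q - Nop \<kappa> (apply_bcontfun (U (tn + s')) x)" "Nop \<kappa> (apply_bcontfun (U (tn + s')) x)"] by simp
      then show ?thesis using a b c unfolding Dtot_def by linarith
    qed
    have Sup: "(SUP s'\<in>{0..\<tau>}. norm (P s')) \<le> \<kappa> * ?c + Dtot"
      by (rule cSUP_least) (use t Pb in auto)
    have cP: "continuous_on {0..\<tau>} (\<lambda>s'. Pn unif_nodes \<epsilon> \<kappa> \<tau> Vn r s' x)"
      unfolding Pn_def by (rule Pint_cont)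
    have "norm (Pn unif_nodes \<epsilon> \<kappa> \<tau> Vn r s x - alpha \<kappa> \<tau> (Pn unif_nodes \<epsilon> \<kappa> \<tau> Vn r) x *\<^sub>R Pn unif_nodes \<epsilon> \<kappa> \<tau> Vn r s x) \<le> Dtot"
      using alpha_facts(3)[where \<tau>=\<tau> and \<kappa>=\<kappa> and P="Pn unif_nodes \<epsilon> \<kappa> \<tau> Vn r" and x=x and s=s and D=Dtot]
        t kp cP s Dtot0 Sup unfolding P_def by simp
    then show ?thesis by (simp add: Ptn_def alphan_def)
  qed
  have "supnorm (\<lambda>x. Pn unif_nodes \<epsilon> \<kappa> \<tau> Vn r s x - Ptn unif_nodes \<epsilon> \<kappa> \<tau> Vn r s x) \<le> Dtot"
    unfolding supnorm_def by (rule cSUP_least) (use main in auto)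
  then show ?thesis unfolding Dtot_def ee_def W_def K_def .
qed


theorem lemma3p6:
  fixes \<kappa> :: real and r :: nat
  assumes dim: "CARD('d::finite) \<in> {1, 2, 3}"
    and msize: "CARD('m2::finite) \<le> CARD('m1::finite)"
    and r: "r \<ge> 1"
    and kappa: "\<kappa> \<ge> 3 * real CARD('m2) + 1"
  shows
    "(\<forall>(\<epsilon>::real) (L::real^'d) (\<tau>::real) (Vn :: real^'d \<Rightarrow> real^'m2^'m1) (x::real^'d).
        \<epsilon> > 0 \<and> (\<forall>i. L$i > 0) \<and> \<tau> > 0 \<and>
        continuous_on UNIV Vn \<and> periodic_box L Vn \<and> (\<forall>y. norm (Vn y) \<le> sqrt (real CARD('m2))) \<and>
        (SUP s\<in>{0..\<tau>}. norm (Pn unif_nodes \<epsilon> \<kappa> \<tau> Vn r s x)) \<le> \<kappa> * sqrt (real CARD('m2))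
        \<longrightarrow> alphan unif_nodes \<epsilon> \<kappa> \<tau> Vn r x = 1 \<and>
            (\<forall>s. Ptn unif_nodes \<epsilon> \<kappa> \<tau> Vn r s x = Pn unif_nodes \<epsilon> \<kappa> \<tau> Vn r s x))
     \<and>
     (\<exists>C :: real \<Rightarrow> real.
      \<forall>(\<epsilon>::real) (L::real^'d) (T::real) (U :: real \<Rightarrow> ((real^'d) \<Rightarrow>\<^sub>C (real^'m2^'m1)))
        (Ds :: nat \<Rightarrow> real \<Rightarrow> ((real^'d) \<Rightarrow>\<^sub>C (real^'m2^'m1))) (\<tau>::real) (tn::real)
        (Vn :: real^'d \<Rightarrow> real^'m2^'m1) (s::real).
        \<epsilon> > 0 \<and> (\<forall>i. L$i > 0) \<and> T > 0 \<and>
        Ck_derivs (r + 1) T U Ds \<and>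
        exact_solution \<epsilon> L T U \<and>
        (\<forall>t\<in>{0..T}. norm (U t) \<le> sqrt (real CARD('m2))) \<and>
        \<tau> > 0 \<and> tn \<ge> 0 \<and> tn + \<tau> \<le> T \<and>
        continuous_on UNIV Vn \<and> periodic_box L Vn \<and> (\<forall>y. norm (Vn y) \<le> sqrt (real CARD('m2))) \<and>
        s \<in> {0..\<tau>}
        \<longrightarrow>
        supnorm (\<lambda>x. Pn unif_nodes \<epsilon> \<kappa> \<tau> Vn r s x - Ptn unif_nodes \<epsilon> \<kappa> \<tau> Vn r s x)
          \<le> 2 * \<kappa> * real r ^ r *
             (\<Sum>k=0..r. supnorm (\<lambda>x. Wn unif_nodes \<epsilon> \<kappa> \<tau> Vn r (real k * \<tau> / real r) x
                                    - apply_bcontfun (U (tn + real k * \<tau> / real r)) x))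
            + C (Ck_norm (r + 1) T Ds) * \<tau> ^ (r + 1))"
  proof -
  have k0: "\<kappa> \<ge> 0" using kappa by (smt (verit) of_nat_0_le_iff)
  have I: "\<forall>(\<epsilon>::real) (L::real^'d) (\<tau>::real) (Vn :: real^'d \<Rightarrow> real^'m2^'m1) (x::real^'d).
        \<epsilon> > 0 \<and> (\<forall>i. L$i > 0) \<and> \<tau> > 0 \<and>
        continuous_on UNIV Vn \<and> periodic_box L Vn \<and> (\<forall>y. norm (Vn y) \<le> sqrt (real CARD('m2))) \<and>
        (SUP s\<in>{0..\<tau>}. norm (Pn unif_nodes \<epsilon> \<kappa> \<tau> Vn r s x)) \<le> \<kappa> * sqrt (real CARD('m2))
        \<longrightarrow> alphan unif_nodes \<epsilon> \<kappa> \<tau> Vn r x = 1 \<and>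
            (\<forall>s. Ptn unif_nodes \<epsilon> \<kappa> \<tau> Vn r s x = Pn unif_nodes \<epsilon> \<kappa> \<tau> Vn r s x)"
    using partI[OF k0] by blast
  show ?thesis
  proof (rule conjI[OF I], rule exI[of _ "Cf \<kappa> r"], intro allI impI, elim conjE)
    fix \<epsilon> :: real and L :: "real^'d" and T :: real and U :: "real \<Rightarrow> ((real^'d) \<Rightarrow>\<^sub>C (real^'m2^'m1))"
      and Ds :: "nat \<Rightarrow> real \<Rightarrow> ((real^'d) \<Rightarrow>\<^sub>C (real^'m2^'m1))" and \<tau> tn :: real
      and Vn :: "real^'d \<Rightarrow> real^'m2^'m1" and s :: real
    assume "\<epsilon> > 0" "\<forall>i. L$i > 0" "T > 0" "Ck_derivs (r + 1) T U Ds" "exact_solution \<epsilon> L T U"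
      "\<forall>t\<in>{0..T}. norm (U t) \<le> sqrt (real CARD('m2))" "\<tau> > 0" "tn \<ge> 0" "tn + \<tau> \<le> T"
      "continuous_on UNIV Vn" "periodic_box L Vn" "\<forall>y. norm (Vn y) \<le> sqrt (real CARD('m2))" "s \<in> {0..\<tau>}"
    then show "supnorm (\<lambda>x. Pn unif_nodes \<epsilon> \<kappa> \<tau> Vn r s x - Ptn unif_nodes \<epsilon> \<kappa> \<tau> Vn r s x)
          \<le> 2 * \<kappa> * real r ^ r *
             (\<Sum>k=0..r. supnorm (\<lambda>x. Wn unif_nodes \<epsilon> \<kappa> \<tau> Vn r (real k * \<tau> / real r) x
                                    - apply_bcontfun (U (tn + real k * \<tau> / real r)) x))
            + Cf \<kappa> r (Ck_norm (r + 1) T Ds) * \<tau> ^ (r + 1)"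
      by (intro partII[OF r kappa]) auto
  qed
qed

end
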